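(* Let $H=(V,E)$ be a hypergraph such that the digraph $\mathcal D_3(H)$ has a spanning subdigraph that is a vertex-disjoint union of non-trivial arborescences. Then $H$ is quasi-eulerian.
   Context: A hypergraph $H=(V,E)$ consists of a finite nonempty vertex set $V$, a finite edge set $E$ disjoint from $V$, and an incidence function assigning to each edge $e\in E$ a subset of $V$ (also denoted $e$); distinct edges may have the same vertex set. Hypergraphs are assumed to have no empty edges. A walk is a sequence $W=v_0e_1v_1e_2\cdots e_kv_k$ with $v_i\in V$, $e_i\in E$, such that for each $i$, $v_{i-1}\ne v_i$ and $v_{i-1},v_i\in e_i$; the $v_i$ are its anchors. $W$ is closed if $k\ge 2$ and $v_0=v_k$; it is a strict trail if $e_1,\dots,e_k$ are pairwise distinct. An Euler family of $H$ is a family of closed strict trails such that every edge of $H$ lies in exactly one trail and no two trails have a common anchor; $H$ is quasi-eulerian if it has one. $\mathcal D_3(H)$ is the digraph with vertex set $E$ and arc set $\{(e,f): e,f\in E,\ |f\setminus e|=1,\ |e\cap f|\ge 3\}$. An arborescence is a digraph whose underlying undirected graph is a tree and whose arcs are all directed towards a root; it is non-trivial if it has at least two vertices. *)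

theory Defs
  imports Main
begin

text \<open>A hypergraph: vertex set V (type 'v), edge set E (type 'e, so disjoint from V),
  incidence function inc giving each edge its (nonempty) vertex set.\<close>
definition hypergraph :: "'v set \<Rightarrow> 'e set \<Rightarrow> ('e \<Rightarrow> 'v set) \<Rightarrow> bool" where
  "hypergraph V E inc \<longleftrightarrow> finite V \<and> V \<noteq> {} \<and> finite E \<and>
     (\<forall>e\<in>E. inc e \<subseteq> V \<and> inc e \<noteq> {})"

text \<open>A walk v0 e1 v1 ... ek vk is represented by the anchor list [v0,...,vk]
  and the edge list [e1,...,ek].\<close>
definition is_walk :: "'v set \<Rightarrow> 'e set \<Rightarrow> ('e \<Rightarrow> 'v set) \<Rightarrow> 'v list \<Rightarrow> 'e list \<Rightarrow> bool" where
  "is_walk V E inc vs es \<longleftrightarrow> length vs = length es + 1 \<and> set vs \<subseteq> V \<and> set es \<subseteq> E \<and>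
     (\<forall>i<length es. vs ! i \<noteq> vs ! (i+1) \<and> vs ! i \<in> inc (es ! i) \<and> vs ! (i+1) \<in> inc (es ! i))"

definition closed_strict_trail :: "'v set \<Rightarrow> 'e set \<Rightarrow> ('e \<Rightarrow> 'v set) \<Rightarrow> 'v list \<Rightarrow> 'e list \<Rightarrow> bool" where
  "closed_strict_trail V E inc vs es \<longleftrightarrow> is_walk V E inc vs es \<and> length es \<ge> 2 \<and>
     hd vs = last vs \<and> distinct es"

definition euler_family :: "'v set \<Rightarrow> 'e set \<Rightarrow> ('e \<Rightarrow> 'v set) \<Rightarrow> ('v list \<times> 'e list) set \<Rightarrow> bool" where
  "euler_family V E inc F \<longleftrightarrow>
     (\<forall>W\<in>F. closed_strict_trail V E inc (fst W) (snd W)) \<and>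
     (\<forall>e\<in>E. \<exists>!W. W \<in> F \<and> e \<in> set (snd W)) \<and>
     (\<forall>W1\<in>F. \<forall>W2\<in>F. W1 \<noteq> W2 \<longrightarrow> set (fst W1) \<inter> set (fst W2) = {})"

definition quasi_eulerian :: "'v set \<Rightarrow> 'e set \<Rightarrow> ('e \<Rightarrow> 'v set) \<Rightarrow> bool" where
  "quasi_eulerian V E inc \<longleftrightarrow> (\<exists>F. euler_family V E inc F)"

text \<open>Arc set of the digraph D_3(H) (its vertex set is E).\<close>
definition D3_arcs :: "'e set \<Rightarrow> ('e \<Rightarrow> 'v set) \<Rightarrow> ('e \<times> 'e) set" where
  "D3_arcs E inc = {(e,f). e \<in> E \<and> f \<in> E \<and> card (inc f - inc e) = 1 \<and> card (inc e \<inter> inc f) \<ge> 3}"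

text \<open>Digraph (C, A) is an arborescence: the underlying undirected multigraph is a tree
  (connected, loopless, |A| = |C| - 1) and every vertex reaches the root by a directed path,
  i.e. all arcs are directed towards the root.\<close>
definition arborescence :: "'a set \<Rightarrow> ('a \<times> 'a) set \<Rightarrow> bool" where
  "arborescence C A \<longleftrightarrow> finite C \<and> A \<subseteq> C \<times> C \<and> (\<forall>x. (x,x) \<notin> A) \<and>
     card A + 1 = card C \<and>
     (\<forall>x\<in>C. \<forall>y\<in>C. (x,y) \<in> (A \<union> A\<inverse>)\<^sup>*) \<and>
     (\<exists>r\<in>C. \<forall>x\<in>C. (x,r) \<in> A\<^sup>*)"

definition has_spanning_arborescence_forest :: "'a set \<Rightarrow> ('a \<times> 'a) set \<Rightarrow> bool" where
  "has_spanning_arborescence_forest N Arcs \<longleftrightarrow>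
     (\<exists>A P. A \<subseteq> Arcs \<and>
        \<Union>P = N \<and> (\<forall>C\<in>P. \<forall>D\<in>P. C \<noteq> D \<longrightarrow> C \<inter> D = {}) \<and>
        A \<subseteq> (\<Union>C\<in>P. C \<times> C) \<and>
        (\<forall>C\<in>P. card C \<ge> 2 \<and> arborescence C (A \<inter> (C \<times> C))))"

end

theory Submission
  imports Defs
begin

fun chain :: "('v \<times> 'e \<times> 'v) list \<Rightarrow> bool" where
  "chain [] = True"
| "chain [x] = True"
| "chain (x # y # zs) = (snd (snd x) = fst y \<and> chain (y # zs))"

definition src :: "('v \<times> 'e \<times> 'v) list \<Rightarrow> 'v" where "src xs = fst (hd xs)"
definition trg :: "('v \<times> 'e \<times> 'v) list \<Rightarrow> 'v" where "trg xs = snd (snd (last xs))"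
definition edges :: "('v \<times> 'e \<times> 'v) list \<Rightarrow> 'e set" where "edges xs = set (map (fst \<circ> snd) xs)"
definition anch :: "('v \<times> 'e \<times> 'v) list \<Rightarrow> 'v set" where "anch xs = set (map fst xs)"

definition vstep :: "'v set \<Rightarrow> 'e set \<Rightarrow> ('e \<Rightarrow> 'v set) \<Rightarrow> 'v \<times> 'e \<times> 'v \<Rightarrow> bool" where
  "vstep V E inc s \<longleftrightarrow> fst s \<noteq> snd (snd s) \<and> fst s \<in> inc (fst (snd s)) \<and> snd (snd s) \<in> inc (fst (snd s))
     \<and> fst (snd s) \<in> E \<and> fst s \<in> V \<and> snd (snd s) \<in> V"

definition trl :: "'v set \<Rightarrow> 'e set \<Rightarrow> ('e \<Rightarrow> 'v set) \<Rightarrow> ('v \<times> 'e \<times> 'v) list \<Rightarrow> bool" where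
  "trl V E inc xs \<longleftrightarrow> xs \<noteq> [] \<and> chain xs \<and> (\<forall>s\<in>set xs. vstep V E inc s) \<and> distinct (map (fst \<circ> snd) xs)"

definition ctrl where "ctrl V E inc xs \<longleftrightarrow> trl V E inc xs \<and> trg xs = src xs \<and> length xs \<ge> 2"
definition seg where "seg V E inc xs \<longleftrightarrow> trl V E inc xs \<and> src xs \<noteq> trg xs"

lemma chain_append:
  "chain (xs @ ys) \<longleftrightarrow> chain xs \<and> chain ys \<and> (xs \<noteq> [] \<longrightarrow> ys \<noteq> [] \<longrightarrow> snd (snd (last xs)) = fst (hd ys))"
proof (induction xs rule: chain.induct)
  case 1 then show ?case by simp
next
  case (2 x) then show ?case by (cases ys) auto
next
  case (3 x y zs) then show ?case by auto
qed

lemma chain_nth: "chain xs \<Longrightarrow> Suc i < length xs \<Longrightarrow> snd (snd (xs ! i)) = fst (xs ! Suc i)"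
proof (induction xs arbitrary: i rule: chain.induct)
  case (3 x y zs) then show ?case by (cases i) auto
qed auto

lemma chain_rotate1_aux: "chain (x # ys) \<Longrightarrow> trg (x # ys) = src (x # ys) \<Longrightarrow> chain (ys @ [x]) \<and> trg (ys @ [x]) = src (ys @ [x])"
proof -
  assume c: "chain (x # ys)" and t: "trg (x # ys) = src (x # ys)"
  show ?thesis
proof (cases ys)
  case Nil then show ?thesis using t by (simp add: trg_def src_def)
next
  case (Cons y zs)
  have cy: "chain ys" using c Cons by simp
  have "snd (snd (last ys)) = fst x" using t Cons by (simp add: trg_def src_def)
  then have "chain (ys @ [x])" unfolding chain_append using cy Cons by simp
  moreover have "trg (ys @ [x]) = src (ys @ [x])" using c Cons by (simp add: trg_def src_def)
  ultimately show ?thesis by simp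
qed
qed

lemma chain_rotate1: "xs \<noteq> [] \<Longrightarrow> chain xs \<Longrightarrow> trg xs = src xs \<Longrightarrow> chain (rotate1 xs) \<and> trg (rotate1 xs) = src (rotate1 xs)"
  by (cases xs) (simp_all add: chain_rotate1_aux)

lemma chain_rotate: "xs \<noteq> [] \<Longrightarrow> chain xs \<Longrightarrow> trg xs = src xs \<Longrightarrow> chain (rotate n xs) \<and> trg (rotate n xs) = src (rotate n xs)"
proof (induction n)
  case 0 then show ?case by simp
next
  case (Suc n)
  then show ?case using chain_rotate1[of "rotate n xs"] by (simp add: rotate_Suc)
qed

lemma ctrl_rotate:
  assumes "ctrl V E inc xs" "v \<in> anch xs"
  shows "\<exists>ys. ctrl V E inc ys \<and> src ys = v \<and> edges ys = edges xs \<and> anch ys = anch xs"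
proof -
  from assms(2) obtain i where i: "i < length xs" "v = fst (xs ! i)" by (auto simp: anch_def in_set_conv_nth)
  let ?ys = "rotate i xs"
  have ne: "xs \<noteq> []" using assms(1) by (simp add: ctrl_def trl_def)
  have "?ys ! 0 = xs ! i" using i ne by (simp add: nth_rotate)
  then have "src ?ys = v" using i ne by (simp add: src_def hd_conv_nth)
  moreover have "ctrl V E inc ?ys" using assms(1) chain_rotate[of xs i] ne
    by (auto simp: ctrl_def trl_def rotate_map[symmetric])
  moreover have "edges ?ys = edges xs" "anch ?ys = anch xs" by (simp_all add: edges_def anch_def)
  ultimately show ?thesis by blast
qed

lemma ctrl_splice:
  assumes "ctrl V E inc x" "ctrl V E inc y" "edges x \<inter> edges y = {}" "v \<in> anch x" "v \<in> anch y"
  shows "\<exists>z. ctrl V E inc z \<and> edges z = edges x \<union> edges y \<and> anch z = anch x \<union> anch y"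
proof -
  obtain x' where x': "ctrl V E inc x'" "src x' = v" "edges x' = edges x" "anch x' = anch x"
    using ctrl_rotate[OF assms(1,4)] by blast
  obtain y' where y': "ctrl V E inc y'" "src y' = v" "edges y' = edges y" "anch y' = anch y"
    using ctrl_rotate[OF assms(2,5)] by blast
  have tx: "trl V E inc x'" "trg x' = v" and ty: "trl V E inc y'" "trg y' = v"
    using x' y' by (auto simp: ctrl_def)
  have nx: "x' \<noteq> []" and ny: "y' \<noteq> []" using tx ty by (auto simp: trl_def)
  have cx: "chain x'" and cy: "chain y'" using tx ty by (auto simp: trl_def)
  have "snd (snd (last x')) = fst (hd y')" using tx(2) y'(2) by (simp add: trg_def src_def)
  then have ch: "chain (x' @ y')" unfolding chain_append using cx cy by simp
  have dx: "distinct (map (fst \<circ> snd) x')" and dy: "distinct (map (fst \<circ> snd) y')"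
    using tx ty by (auto simp: trl_def)
  have "set (map (fst \<circ> snd) x') \<inter> set (map (fst \<circ> snd) y') = {}"
    using assms(3) x'(3) y'(3) unfolding edges_def by simp
  then have di: "distinct (map (fst \<circ> snd) (x' @ y'))" using dx dy by simp
  have vs: "\<forall>s\<in>set (x' @ y'). vstep V E inc s" using tx ty by (auto simp: trl_def)
  have "trg (x' @ y') = trg y'" using ny by (simp add: trg_def)
  moreover have "src (x' @ y') = src x'" using nx by (simp add: src_def)
  ultimately have cl: "trg (x' @ y') = src (x' @ y')" using ty(2) x'(2) by simp
  have "length (x' @ y') \<ge> 2" using nx ny by (cases x'; cases y') auto
  then have "ctrl V E inc (x' @ y')" using ch di vs cl nx unfolding ctrl_def trl_def by simp
  moreover have "edges (x' @ y') = edges x \<union> edges y" "anch (x' @ y') = anch x \<union> anch y"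
    using x'(3,4) y'(3,4) by (auto simp: edges_def anch_def)
  ultimately show ?thesis by blast
qed

definition EF where
  "EF V E inc E' F \<longleftrightarrow> (\<forall>x\<in>F. ctrl V E inc x) \<and> (\<Union>x\<in>F. edges x) = E' \<and>
     (\<forall>x\<in>F. \<forall>y\<in>F. x \<noteq> y \<longrightarrow> edges x \<inter> edges y = {} \<and> anch x \<inter> anch y = {})"

lemma ctrl_edges_ne: "ctrl V E inc x \<Longrightarrow> edges x \<noteq> {}"
  by (auto simp: ctrl_def trl_def edges_def)

lemma EF_merge:
  assumes "finite F" "EF V E inc E1 F" "ctrl V E inc W" "edges W \<inter> E1 = {}"
  shows "\<exists>F'. finite F' \<and> EF V E inc (E1 \<union> edges W) F'"
  using assms
proof (induction "card F" arbitrary: F E1 W rule: less_induct)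
  case less
  show ?case
  proof (cases "\<exists>T\<in>F. anch T \<inter> anch W \<noteq> {}")
    case False
    have sub: "\<And>T. T \<in> F \<Longrightarrow> edges T \<subseteq> E1" using less.prems(2) unfolding EF_def by blast
    have "W \<notin> F"
    proof
      assume "W \<in> F"
      then have "edges W \<subseteq> E1" using sub by blast
      then show False using less.prems(4) ctrl_edges_ne[OF less.prems(3)] by blast
    qed
    have ef: "(\<forall>x\<in>F. ctrl V E inc x)" "(\<Union>x\<in>F. edges x) = E1"
      "\<forall>x\<in>F. \<forall>y\<in>F. x \<noteq> y \<longrightarrow> edges x \<inter> edges y = {} \<and> anch x \<inter> anch y = {}"
      using less.prems(2) unfolding EF_def by blast+
    have d1: "\<forall>x\<in>F. edges x \<inter> edges W = {} \<and> anch x \<inter> anch W = {}"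
      using sub less.prems(4) False by blast
    have "\<forall>x\<in>insert W F. \<forall>y\<in>insert W F. x \<noteq> y \<longrightarrow> edges x \<inter> edges y = {} \<and> anch x \<inter> anch y = {}"
    proof (intro ballI impI)
      fix x y assume "x \<in> insert W F" "y \<in> insert W F" "x \<noteq> y"
      then show "edges x \<inter> edges y = {} \<and> anch x \<inter> anch y = {}"
        using ef(3) d1 by (metis Int_commute insertE)
    qed
    then have "EF V E inc (E1 \<union> edges W) (insert W F)"
      using ef(1,2) less.prems(3) unfolding EF_def by auto
    then show ?thesis using less.prems(1) by blast
  next
    case True
    then obtain T v where T: "T \<in> F" "v \<in> anch T" "v \<in> anch W" by blast
    have ef: "(\<forall>x\<in>F. ctrl V E inc x)" "(\<Union>x\<in>F. edges x) = E1"
      "\<forall>x\<in>F. \<forall>y\<in>F. x \<noteq> y \<longrightarrow> edges x \<inter> edges y = {} \<and> anch x \<inter> anch y = {}"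
      using less.prems(2) unfolding EF_def by blast+
    have subT: "edges T \<subseteq> E1" using ef(2) T(1) by blast
    then have "edges W \<inter> edges T = {}" using less.prems(4) by blast
    then obtain W' where W': "ctrl V E inc W'" "edges W' = edges W \<union> edges T" "anch W' = anch W \<union> anch T"
      using ctrl_splice[OF less.prems(3) ef(1)[rule_format, OF T(1)] _ T(3) T(2)] by blast
    let ?F = "F - {T}" and ?E = "E1 - edges T"
    have "(\<Union>x\<in>?F. edges x) = ?E"
    proof
      show "(\<Union>x\<in>?F. edges x) \<subseteq> ?E"
      proof
        fix e assume "e \<in> (\<Union>x\<in>?F. edges x)"
        then obtain x where x: "x \<in> F" "x \<noteq> T" "e \<in> edges x" by blast
        have "e \<in> E1" using ef(2) x by blast
        moreover have "edges x \<inter> edges T = {}" using ef(3) x(1,2) T(1) by blast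
        ultimately show "e \<in> ?E" using x(3) by blast
      qed
      show "?E \<subseteq> (\<Union>x\<in>?F. edges x)" using ef(2) by blast
    qed
    then have "EF V E inc ?E ?F" using ef unfolding EF_def by (meson DiffD1)
    moreover have "card ?F < card F" by (rule card_Diff1_less[OF less.prems(1) T(1)])
    moreover have "edges W' \<inter> ?E = {}" using W'(2) less.prems(4) by blast
    moreover have "finite ?F" using less.prems(1) by simp
    ultimately obtain F' where "finite F'" "EF V E inc (?E \<union> edges W') F'"
      using less.hyps W'(1) by blast
    moreover have "?E \<union> edges W' = E1 \<union> edges W" using W'(2) subT by blast
    ultimately show ?thesis by auto
  qed
qed

definition rv :: "'v \<times> 'e \<times> 'v \<Rightarrow> 'v \<times> 'e \<times> 'v" where
  "rv s = (snd (snd s), fst (snd s), fst s)"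
definition revs :: "('v \<times> 'e \<times> 'v) list \<Rightarrow> ('v \<times> 'e \<times> 'v) list" where
  "revs xs = rev (map rv xs)"

lemma chain_revs: "chain xs \<Longrightarrow> chain (revs xs)"
proof (induction xs rule: chain.induct)
  case (3 x y zs)
  have e: "revs (x#y#zs) = revs (y#zs) @ [rv x]" by (simp add: revs_def)
  have l: "last (revs (y#zs)) = rv y" by (simp add: revs_def)
  have c: "chain (revs (y#zs))" using 3 by simp
  have "snd (snd (last (revs (y#zs)))) = fst (hd [rv x])" using l 3(2) by (simp add: rv_def)
  then have "chain (revs (y # zs) @ [rv x])" unfolding chain_append using c by simp
  then show ?case using e by simp
qed (auto simp: revs_def)

lemma revs_props:
  assumes "trl V E inc xs"
  shows "trl V E inc (revs xs)" "src (revs xs) = trg xs" "trg (revs xs) = src xs" "edges (revs xs) = edges xs"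
proof -
  have ne: "xs \<noteq> []" using assms by (simp add: trl_def)
  have m: "map (fst \<circ> snd) (revs xs) = rev (map (fst \<circ> snd) xs)" by (induction xs) (simp_all add: revs_def rv_def)
  have "\<forall>s\<in>set (revs xs). vstep V E inc s" using assms
    by (auto simp: revs_def trl_def vstep_def rv_def)
  then show "trl V E inc (revs xs)" using assms chain_revs ne m by (auto simp: trl_def revs_def)
  show "src (revs xs) = trg xs" using ne by (simp add: src_def trg_def revs_def hd_rev last_map rv_def)
  show "trg (revs xs) = src xs" using ne by (simp add: src_def trg_def revs_def last_rev hd_map rv_def)
  show "edges (revs xs) = edges xs" using m by (simp add: edges_def)
qed

lemma card_rm1: "finite S \<Longrightarrow> s \<in> S \<Longrightarrow> card {x\<in>S. P x} = card {x\<in>S-{s}. P x} + of_bool (P s)"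
proof -
  assume f: "finite S" and s: "s \<in> S"
  show ?thesis
  proof (cases "P s")
    case True
    then have "{x\<in>S. P x} = insert s {x\<in>S-{s}. P x}" using s by blast
    then show ?thesis using f True by simp
  next
    case False
    then have "{x\<in>S. P x} = {x\<in>S-{s}. P x}" by blast
    then show ?thesis using False by simp
  qed
qed

lemma card_rm2: "finite S \<Longrightarrow> s \<in> S \<Longrightarrow> t \<in> S \<Longrightarrow> s \<noteq> t \<Longrightarrow>
   card {x\<in>S. P x} = card {x\<in>S-{s,t}. P x} + of_bool (P s) + of_bool (P t)"
proof -
  assume a: "finite S" "s \<in> S" "t \<in> S" "s \<noteq> t"
  have "card {x\<in>S. P x} = card {x\<in>S-{s}. P x} + of_bool (P s)" by (rule card_rm1[OF a(1,2)])
  moreover have "card {x\<in>S-{s}. P x} = card {x\<in>S-{s}-{t}. P x} + of_bool (P t)"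
    by (rule card_rm1) (use a in auto)
  moreover have "S - {s} - {t} = S - {s,t}" by blast
  ultimately show ?thesis by simp
qed

lemma card_ins: "finite S \<Longrightarrow> u \<notin> S \<Longrightarrow> card {x\<in>insert u S. P x} = card {x\<in>S. P x} + of_bool (P u)"
proof -
  assume a: "finite S" "u \<notin> S"
  have "insert u S - {u} = S" using a(2) by blast
  then show ?thesis using card_rm1[of "insert u S" u P] a(1) by simp
qed

lemma seg_EF:
  assumes "finite S" "\<forall>s\<in>S. seg V E inc s"
    "\<forall>s\<in>S. \<forall>t\<in>S. s \<noteq> t \<longrightarrow> edges s \<inter> edges t = {}"
    "\<forall>v. even (card {s\<in>S. v = src s \<or> v = trg s})"
  shows "\<exists>F. finite F \<and> EF V E inc (\<Union>s\<in>S. edges s) F"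
  using assms
proof (induction "card S" arbitrary: S rule: less_induct)
  case less
  show ?case
  proof (cases "S = {}")
    case True
    then have "EF V E inc (\<Union>s\<in>S. edges s) {}" by (simp add: EF_def)
    then show ?thesis by blast
  next
    case False
    then obtain s where s: "s \<in> S" by blast
    have segs: "seg V E inc s" using less.prems(2) s by blast
    define a where "a = trg s"
    define b where "b = src s"
    have ab: "a \<noteq> b" using segs by (auto simp: seg_def a_def b_def)
    let ?N = "{t\<in>S. a = src t \<or> a = trg t}"
    have sN: "s \<in> ?N" using s a_def by blast
    have evN: "even (card ?N)" using less.prems(4) by blast
    have "?N \<noteq> {s}"
    proof
      assume "?N = {s}"
      then have "card ?N = 1" by simp
      then show False using evN by simp
    qed
    then obtain t where t: "t \<in> S" "t \<noteq> s" "a = src t \<or> a = trg t" using sN by blast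
    have segt: "seg V E inc t" using less.prems(2) t(1) by blast
    have trt: "trl V E inc t" using segt by (simp add: seg_def)
    define t' where "t' = (if src t = a then t else revs t)"
    have t'p: "trl V E inc t'" "src t' = a" "edges t' = edges t" "{src t', trg t'} = {src t, trg t}"
      using revs_props[OF trt] trt t(3) by (auto simp: t'_def)
    define c where "c = trg t'"
    have ca: "c \<noteq> a" using segt t'p(2,4) c_def by (auto simp: seg_def doubleton_eq_iff)
    have Pt: "\<And>v. (v = src t \<or> v = trg t) \<longleftrightarrow> (v = a \<or> v = c)"
      using t'p(2,4) c_def by blast
    have Ps: "\<And>v. (v = src s \<or> v = trg s) \<longleftrightarrow> (v = a \<or> v = b)"
      using a_def b_def by blast
    define u where "u = s @ t'"
    have tr_s: "trl V E inc s" using segs by (simp add: seg_def)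
    have ns: "s \<noteq> []" and nt: "t' \<noteq> []" using tr_s t'p(1) by (auto simp: trl_def)
    have edisj: "edges s \<inter> edges t = {}" using less.prems(3) s t(1,2) by blast
    have "snd (snd (last s)) = fst (hd t')" using t'p(2) a_def by (simp add: src_def trg_def)
    then have chu: "chain u" unfolding u_def chain_append using tr_s t'p(1) by (simp add: trl_def)
    have "set (map (fst \<circ> snd) s) \<inter> set (map (fst \<circ> snd) t') = {}"
      using edisj t'p(3) by (simp add: edges_def)
    then have diu: "distinct (map (fst \<circ> snd) u)" using tr_s t'p(1) by (simp add: trl_def u_def)
    have vsu: "\<forall>x\<in>set u. vstep V E inc x" using tr_s t'p(1) by (auto simp: trl_def u_def)
    have tru: "trl V E inc u" using chu diu vsu ns by (simp add: trl_def u_def)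
    have srcu: "src u = b" using ns by (simp add: u_def src_def b_def)
    have trgu: "trg u = c" using nt by (simp add: u_def trg_def c_def)
    have edu: "edges u = edges s \<union> edges t" using t'p(3) by (simp add: u_def edges_def)
    have lenu: "length u \<ge> 2" using ns nt by (cases s; cases t') (auto simp: u_def)
    let ?S = "S - {s,t}"
    have finS: "finite ?S" using less.prems(1) by simp
    have cnt: "card {x\<in>S. v = src x \<or> v = trg x} =
       card {x\<in>?S. v = src x \<or> v = trg x} + of_bool (v = a \<or> v = b) + of_bool (v = a \<or> v = c)" for v
    proof -
      have "card {x\<in>S. v = src x \<or> v = trg x} =
       card {x\<in>?S. v = src x \<or> v = trg x} + of_bool (v = src s \<or> v = trg s) + of_bool (v = src t \<or> v = trg t)"
        by (rule card_rm2[OF less.prems(1) s t(1) t(2)[symmetric]])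
      then show ?thesis using Ps[of v] Pt[of v] by simp
    qed
    have segS: "\<forall>x\<in>?S. seg V E inc x" using less.prems(2) by blast
    have disS: "\<forall>x\<in>?S. \<forall>y\<in>?S. x \<noteq> y \<longrightarrow> edges x \<inter> edges y = {}" using less.prems(3) by blast
    have disu: "\<forall>x\<in>?S. edges x \<inter> edges u = {}"
    proof
      fix x assume x: "x \<in> ?S"
      then have "edges x \<inter> edges s = {}" "edges x \<inter> edges t = {}" using less.prems(3) s t(1) by blast+
      then show "edges x \<inter> edges u = {}" using edu by blast
    qed
    have U: "(\<Union>x\<in>S. edges x) = (\<Union>x\<in>?S. edges x) \<union> edges u" using edu s t(1) by blast
    have cSeq: "card ?S + 2 = card S"
    proof -
      have "card ?S = card S - card {s,t}" using less.prems(1) s t(1) by (simp add: card_Diff_subset)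
      moreover have "card {s,t} = 2" using t(2) by simp
      moreover have "card {s,t} \<le> card S" using card_mono[OF less.prems(1), of "{s,t}"] s t(1) by simp
      ultimately show ?thesis by simp
    qed
    then have cS: "card ?S < card S" by simp
    show ?thesis
    proof (cases "b = c")
      case True
      have evS: "\<forall>v. even (card {x\<in>?S. v = src x \<or> v = trg x})"
      proof
        fix v
        have e1: "even (card {x\<in>S. v = src x \<or> v = trg x})" using less.prems(4) by blast
        have "of_bool (v = a \<or> v = b) + of_bool (v = a \<or> v = c) = (2::nat) * of_bool (v = a \<or> v = b)"
          using True by simp
        then have "card {x\<in>S. v = src x \<or> v = trg x} = card {x\<in>?S. v = src x \<or> v = trg x} + 2 * of_bool (v = a \<or> v = b)"
          using cnt[of v] by simp
        then show "even (card {x\<in>?S. v = src x \<or> v = trg x})" using e1 by simp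
      qed
      have F'ex: "\<exists>F'. finite F' \<and> EF V E inc (\<Union>x\<in>?S. edges x) F'"
        by (rule less.hyps[OF cS finS segS disS evS])
      then obtain F' where F': "finite F'" "EF V E inc (\<Union>x\<in>?S. edges x) F'" by blast
      have cu: "ctrl V E inc u" using tru srcu trgu True lenu by (simp add: ctrl_def)
      have "edges u \<inter> (\<Union>x\<in>?S. edges x) = {}" using disu by blast
      then have "\<exists>F''. finite F'' \<and> EF V E inc ((\<Union>x\<in>?S. edges x) \<union> edges u) F''"
        by (rule EF_merge[OF F' cu])
      then show ?thesis using U by simp
    next
      case False
      have segu: "seg V E inc u" using tru srcu trgu False by (simp add: seg_def)
      have uS: "u \<notin> ?S"
      proof
        assume "u \<in> ?S"
        then have "edges u \<inter> edges s = {}" using less.prems(3) s by auto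
        moreover have "edges s \<noteq> {}" using ns by (cases s) (auto simp: edges_def)
        ultimately show False using edu by blast
      qed
      let ?S2 = "insert u ?S"
      have cS2: "card ?S2 < card S" using cSeq finS uS by simp
      have fin2: "finite ?S2" using finS by simp
      have seg2: "\<forall>x\<in>?S2. seg V E inc x" using segS segu by blast
      have dis2: "\<forall>x\<in>?S2. \<forall>y\<in>?S2. x \<noteq> y \<longrightarrow> edges x \<inter> edges y = {}"
        using disS disu by (metis Int_commute insertE)
      have ev2: "\<forall>v. even (card {x\<in>?S2. v = src x \<or> v = trg x})"
      proof
        fix v
        have "even (card {x\<in>S. v = src x \<or> v = trg x})" using less.prems(4) by blast
        moreover have "card {x\<in>?S2. v = src x \<or> v = trg x} = card {x\<in>?S. v = src x \<or> v = trg x} + of_bool (v = b \<or> v = c)"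
          using card_ins[OF finS uS] srcu trgu by simp
        ultimately show "even (card {x\<in>?S2. v = src x \<or> v = trg x})" using cnt[of v] ab ca False
          by (cases "v = a"; cases "v = b"; cases "v = c") auto
      qed
      obtain F' where F': "finite F'" "EF V E inc (\<Union>x\<in>?S2. edges x) F'"
        using less.hyps[OF cS2 fin2 seg2 dis2 ev2] by blast
      moreover have "(\<Union>x\<in>?S2. edges x) = (\<Union>x\<in>S. edges x)" using U by blast
      ultimately show ?thesis by auto
    qed
  qed
qed

lemma D3_facts:
  assumes "(x, f) \<in> D3_arcs E inc"
  shows "\<exists>y. inc f - inc x = {y}" "card (inc x \<inter> inc f) \<ge> 3"
  using assms by (auto simp: D3_arcs_def card_1_singleton_iff)

lemma card3_other:
  assumes "card A \<ge> 3"
  shows "\<exists>c\<in>A. c \<noteq> a \<and> c \<noteq> b"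
proof (rule ccontr)
  assume "\<not> ?thesis"
  then have "A \<subseteq> {a,b}" by blast
  then have "card A \<le> card {a,b}" by (rule card_mono[rotated]) simp
  also have "\<dots> \<le> 2" by (simp add: card_insert_le_m1)
  finally show False using assms by simp
qed

lemma card3_two:
  assumes "card A \<ge> 3"
  shows "\<exists>a b. a \<in> A \<and> b \<in> A \<and> a \<noteq> b"
proof -
  have "A \<noteq> {}" using assms by (metis card.empty not_numeral_le_zero)
  then obtain a where "a \<in> A" by blast
  moreover obtain b where "b \<in> A" "b \<noteq> a" "b \<noteq> a" using card3_other[OF assms, of a a] by blast
  ultimately show ?thesis by blast
qed

lemma pairs_forest:
  fixes d :: "'e \<Rightarrow> nat" and inc :: "'e \<Rightarrow> 'v set"
  assumes "finite C"
    "\<forall>x\<in>C. x \<notin> R \<longrightarrow> par x \<in> C \<and> d (par x) < d x \<and> (x, par x) \<in> D3_arcs E inc"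
    "\<forall>x\<in>C\<inter>R. \<exists>y\<in>C-R. par y = x"
  shows "\<exists>p. (\<forall>e\<in>C. p e \<subseteq> inc e \<and> card (p e) = 2) \<and> (\<forall>v. even (card {e\<in>C. v \<in> p e}))"
  using assms
proof (induction "card C" arbitrary: C rule: less_induct)
  case less
  show ?case
  proof (cases "C = {}")
    case True
    then show ?thesis by auto
  next
    case False
    have CR: "C - R \<noteq> {}"
    proof -
      obtain z where z: "z \<in> C" using False by blast
      show ?thesis
      proof (cases "z \<in> R")
        case True
        then show ?thesis using less.prems(3) z by blast
      next
        case False
        then show ?thesis using z by blast
      qed
    qed
    have finCR: "finite (C - R)" using less.prems(1) by simp
    have "Max (d ` (C - R)) \<in> d ` (C - R)" using Max_in[of "d ` (C - R)"] finCR CR by simp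
    then obtain x where x: "x \<in> C - R" "d x = Max (d ` (C - R))" by (metis imageE)
    have xmax: "\<forall>z\<in>C-R. d z \<le> d x" using x(2) finCR by simp
    define f where "f = par x"
    have f: "f \<in> C" "d f < d x" "(x, f) \<in> D3_arcs E inc" using less.prems(2) x(1) f_def by auto
    have fx: "f \<noteq> x" using f(2) by auto
    have nochild: "\<forall>z\<in>C-R. par z \<noteq> x"
    proof
      fix z assume z: "z \<in> C - R"
      show "par z \<noteq> x"
      proof
        assume "par z = x"
        then have "d x < d z" using less.prems(2) z by auto
        moreover have "d z \<le> d x" using xmax z by blast
        ultimately show False by simp
      qed
    qed
    obtain y0 where y0: "inc f - inc x = {y0}" using D3_facts(1)[OF f(3)] by blast
    have c3: "card (inc x \<inter> inc f) \<ge> 3" using D3_facts(2)[OF f(3)] .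
    show ?thesis
    proof (cases "f \<in> R \<and> (\<forall>z\<in>C-R. par z = f \<longrightarrow> z = x)")
      case True
      let ?C = "C - {x, f}"
      have cC: "card ?C < card C"
        by (rule psubset_card_mono[OF less.prems(1)]) (use x(1) in blast)
      have p2: "\<forall>z\<in>?C. z \<notin> R \<longrightarrow> par z \<in> ?C \<and> d (par z) < d z \<and> (z, par z) \<in> D3_arcs E inc"
      proof (intro ballI impI)
        fix z assume z: "z \<in> ?C" "z \<notin> R"
        have "par z \<noteq> x" using nochild z by blast
        moreover have "par z \<noteq> f" using True z by blast
        ultimately show "par z \<in> ?C \<and> d (par z) < d z \<and> (z, par z) \<in> D3_arcs E inc"
          using less.prems(2) z by blast
      qed
      have p3: "\<forall>r\<in>?C\<inter>R. \<exists>y\<in>?C-R. par y = r"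
      proof
        fix r assume r: "r \<in> ?C \<inter> R"
        then obtain y where y: "y \<in> C - R" "par y = r" using less.prems(3) by blast
        have "y \<noteq> x" using y r f_def by blast
        moreover have "y \<noteq> f" using y True by blast
        ultimately show "\<exists>y\<in>?C-R. par y = r" using y by blast
      qed
      obtain p2 where P2: "\<forall>e\<in>?C. p2 e \<subseteq> inc e \<and> card (p2 e) = 2" "\<forall>v. even (card {e\<in>?C. v \<in> p2 e})"
        using less.hyps[OF cC _ p2 p3] less.prems(1) by auto
      obtain a b where ab: "a \<in> inc x \<inter> inc f" "b \<in> inc x \<inter> inc f" "a \<noteq> b"
        using card3_two[OF c3] by blast
      define p where "p = p2(x := {a,b}, f := {a,b})"
      have "\<forall>e\<in>C. p e \<subseteq> inc e \<and> card (p e) = 2"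
        using P2(1) ab fx by (auto simp: p_def)
      moreover have "\<forall>v. even (card {e\<in>C. v \<in> p e})"
      proof
        fix v
        have "card {e\<in>C. v \<in> p e} = card {e\<in>?C. v \<in> p e} + of_bool (v \<in> p x) + of_bool (v \<in> p f)"
          by (rule card_rm2[OF less.prems(1)]) (use x(1) f(1) fx in auto)
        moreover have "{e\<in>?C. v \<in> p e} = {e\<in>?C. v \<in> p2 e}" by (auto simp: p_def)
        moreover have "p x = {a,b}" "p f = {a,b}" using fx by (auto simp: p_def)
        ultimately show "even (card {e\<in>C. v \<in> p e})" using P2(2) by simp
      qed
      ultimately show ?thesis by blast
    next
      case False
      let ?C = "C - {x}"
      have cC: "card ?C < card C" by (rule card_Diff1_less[OF less.prems(1)]) (use x(1) in blast)
      have fC: "f \<in> ?C" using f(1) fx by blast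
      have p2: "\<forall>z\<in>?C. z \<notin> R \<longrightarrow> par z \<in> ?C \<and> d (par z) < d z \<and> (z, par z) \<in> D3_arcs E inc"
      proof (intro ballI impI)
        fix z assume z: "z \<in> ?C" "z \<notin> R"
        have "par z \<noteq> x" using nochild z by blast
        then show "par z \<in> ?C \<and> d (par z) < d z \<and> (z, par z) \<in> D3_arcs E inc"
          using less.prems(2) z by blast
      qed
      have p3: "\<forall>r\<in>?C\<inter>R. \<exists>y\<in>?C-R. par y = r"
      proof
        fix r assume r: "r \<in> ?C \<inter> R"
        then obtain y where y: "y \<in> C - R" "par y = r" using less.prems(3) by blast
        show "\<exists>y\<in>?C-R. par y = r"
        proof (cases "y = x")
          case False then show ?thesis using y by blast
        next
          case True
          then have "r = f" using y f_def by simp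
          then obtain z where "z \<in> C - R" "par z = r" "z \<noteq> x" using \<open>\<not> (f \<in> R \<and> _)\<close> r by blast
          then show ?thesis by blast
        qed
      qed
      obtain p1 where P1: "\<forall>e\<in>?C. p1 e \<subseteq> inc e \<and> card (p1 e) = 2" "\<forall>v. even (card {e\<in>?C. v \<in> p1 e})"
        using less.hyps[OF cC _ p2 p3] less.prems(1) by auto
      have "card (p1 f) = 2" using P1(1) fC by blast
      then obtain a0 b0 where ab0: "p1 f = {a0, b0}" "a0 \<noteq> b0" by (auto simp: card_2_iff)
      obtain a' bb where ab: "p1 f = {a', bb}" "a' \<noteq> bb" "a' \<noteq> y0"
      proof (cases "a0 = y0")
        case True
        then show ?thesis using that[of b0 a0] ab0 by auto
      next
        case False
        then show ?thesis using that[of a0 b0] ab0 by auto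
      qed
      have pf: "p1 f \<subseteq> inc f" using P1(1) fC by blast
      have a'x: "a' \<in> inc x" using pf ab y0 by blast
      have a'f: "a' \<in> inc f" and bbf: "bb \<in> inc f" using pf ab by auto
      obtain c where c: "c \<in> inc x \<inter> inc f" "c \<noteq> a'" "c \<noteq> bb" using card3_other[OF c3] by blast
      define p where "p = p1(x := {a',c}, f := {bb,c})"
      have "\<forall>e\<in>C. p e \<subseteq> inc e \<and> card (p e) = 2"
      proof
        fix e assume e: "e \<in> C"
        show "p e \<subseteq> inc e \<and> card (p e) = 2"
        proof (cases "e = x")
          case True then show ?thesis using a'x c fx by (simp add: p_def)
        next
          case False
          show ?thesis
          proof (cases "e = f")
            case True then show ?thesis using bbf c fx by (simp add: p_def)
          next
            case False
            then show ?thesis using P1(1) e \<open>e \<noteq> x\<close> by (simp add: p_def)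
          qed
        qed
      qed
      moreover have "\<forall>v. even (card {e\<in>C. v \<in> p e})"
      proof
        fix v
        have "card {e\<in>C. v \<in> p e} = card {e\<in>C-{x,f}. v \<in> p e} + of_bool (v \<in> p x) + of_bool (v \<in> p f)"
          by (rule card_rm2[OF less.prems(1)]) (use x(1) f(1) fx in auto)
        moreover have "{e\<in>C-{x,f}. v \<in> p e} = {e\<in>?C-{f}. v \<in> p1 e}" by (auto simp: p_def)
        moreover have "p x = {a',c}" "p f = {bb,c}" using fx by (auto simp: p_def)
        moreover have "card {e\<in>?C. v \<in> p1 e} = card {e\<in>?C-{f}. v \<in> p1 e} + of_bool (v \<in> p1 f)"
          by (rule card_rm1) (use less.prems(1) fC in auto)
        moreover have "even (card {e\<in>?C. v \<in> p1 e})" using P1(2) by blast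
        ultimately show "even (card {e\<in>C. v \<in> p e})" using ab(1,2) c(2,3)
          by (cases "v = a'"; cases "v = bb"; cases "v = c") auto
      qed
      ultimately show ?thesis by blast
    qed
  qed
qed


lemma arb_root: "arborescence C B \<Longrightarrow> \<exists>r. r \<in> C \<and> (\<forall>x\<in>C. (x, r) \<in> B\<^sup>*)"
  unfolding arborescence_def by (elim conjE bexE) (intro exI conjI)

definition cv :: "('v \<times> 'e \<times> 'v) list \<Rightarrow> 'v list \<times> 'e list" where
  "cv xs = (map fst xs @ [fst (hd xs)], map (fst \<circ> snd) xs)"

lemma cv_ok:
  assumes "ctrl V E inc xs"
  shows "closed_strict_trail V E inc (fst (cv xs)) (snd (cv xs))"
    "set (fst (cv xs)) = anch xs" "set (snd (cv xs)) = edges xs"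
proof -
  have tr: "trl V E inc xs" and cl: "trg xs = src xs" and len: "length xs \<ge> 2"
    using assms by (auto simp: ctrl_def)
  have ne: "xs \<noteq> []" and ch: "chain xs" and vs: "\<forall>s\<in>set xs. vstep V E inc s"
    and di: "distinct (map (fst \<circ> snd) xs)" using tr by (auto simp: trl_def)
  let ?vs = "map fst xs @ [fst (hd xs)]" and ?es = "map (fst \<circ> snd) xs"
  have hdin: "fst (hd xs) \<in> set (map fst xs)" using ne by simp
  show "set (fst (cv xs)) = anch xs" using hdin by (auto simp: cv_def anch_def)
  show "set (snd (cv xs)) = edges xs" by (simp add: cv_def edges_def)
  have step: "?vs ! i \<noteq> ?vs ! (i+1) \<and> ?vs ! i \<in> inc (?es ! i) \<and> ?vs ! (i+1) \<in> inc (?es ! i)"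
    if i: "i < length ?es" for i
  proof -
    have i': "i < length xs" using i by simp
    have v1: "?vs ! i = fst (xs ! i)" using i' by (simp add: nth_append)
    have v2: "?vs ! (i+1) = snd (snd (xs ! i))"
    proof (cases "Suc i < length xs")
      case True
      then have "?vs ! (i+1) = fst (xs ! Suc i)" by (simp add: nth_append)
      then show ?thesis using chain_nth[OF ch True] by simp
    next
      case False
      then have ii: "i = length xs - 1" using i' by simp
      have li: "i + 1 = length (map fst xs)" using ii ne by simp
      have "?vs ! (i+1) = fst (hd xs)" by (subst li) (rule nth_append_length)
      also have "\<dots> = snd (snd (last xs))" using cl by (simp add: src_def trg_def)
      also have "\<dots> = snd (snd (xs ! i))" using ne ii by (simp add: last_conv_nth)
      finally show ?thesis .
    qed
    have e: "?es ! i = fst (snd (xs ! i))" using i' by simp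
    have "vstep V E inc (xs ! i)" using vs i' by simp
    then show ?thesis using v1 v2 e by (simp add: vstep_def)
  qed
  have sV: "set ?vs \<subseteq> V" using vs hdin by (auto simp: vstep_def)
  have sE: "set ?es \<subseteq> E" using vs by (auto simp: vstep_def)
  have "is_walk V E inc ?vs ?es" unfolding is_walk_def using step sV sE by simp
  moreover have "hd ?vs = last ?vs" using ne by (cases xs) auto
  ultimately show "closed_strict_trail V E inc (fst (cv xs)) (snd (cv xs))"
    using len di by (simp add: closed_strict_trail_def cv_def)
qed

lemma EF_euler:
  assumes "EF V E inc E F"
  shows "euler_family V E inc (cv ` F)"
proof -
  have ef: "\<forall>x\<in>F. ctrl V E inc x" "(\<Union>x\<in>F. edges x) = E"
    "\<forall>x\<in>F. \<forall>y\<in>F. x \<noteq> y \<longrightarrow> edges x \<inter> edges y = {} \<and> anch x \<inter> anch y = {}"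
    using assms unfolding EF_def by blast+
  have a: "\<forall>W\<in>cv ` F. closed_strict_trail V E inc (fst W) (snd W)" using ef(1) cv_ok(1) by blast
  have b: "\<forall>e\<in>E. \<exists>!W. W \<in> cv ` F \<and> e \<in> set (snd W)"
  proof
    fix e assume "e \<in> E"
    then obtain x where x: "x \<in> F" "e \<in> edges x" using ef(2) by blast
    show "\<exists>!W. W \<in> cv ` F \<and> e \<in> set (snd W)"
    proof (rule ex1I[of _ "cv x"])
      show "cv x \<in> cv ` F \<and> e \<in> set (snd (cv x))" using x cv_ok(3) ef(1) by blast
    next
      fix W assume W: "W \<in> cv ` F \<and> e \<in> set (snd W)"
      then obtain y where y: "y \<in> F" "W = cv y" by blast
      then have "e \<in> edges y" using W cv_ok(3) ef(1) by blast
      then have "x = y" using ef(3) x y(1) by blast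
      then show "W = cv x" using y by simp
    qed
  qed
  have c: "\<forall>W1\<in>cv ` F. \<forall>W2\<in>cv ` F. W1 \<noteq> W2 \<longrightarrow> set (fst W1) \<inter> set (fst W2) = {}"
  proof (intro ballI impI)
    fix W1 W2 assume W: "W1 \<in> cv ` F" "W2 \<in> cv ` F" "W1 \<noteq> W2"
    then obtain x y where xy: "x \<in> F" "y \<in> F" "W1 = cv x" "W2 = cv y" by blast
    then have "x \<noteq> y" using W(3) by blast
    then have "anch x \<inter> anch y = {}" using ef(3) xy by blast
    then show "set (fst W1) \<inter> set (fst W2) = {}" using xy cv_ok(2) ef(1) by metis
  qed
  show ?thesis using a b c unfolding euler_family_def by blast
qed

theorem theorem2p9:
  fixes V :: "'v set" and E :: "'e set" and inc :: "'e \<Rightarrow> 'v set"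
  assumes "hypergraph V E inc"
    and "has_spanning_arborescence_forest E (D3_arcs E inc)"
  shows "quasi_eulerian V E inc"
proof -
  have hyp: "finite E" "\<forall>e\<in>E. inc e \<subseteq> V \<and> inc e \<noteq> {}" using assms(1) by (auto simp: hypergraph_def)
  obtain A P where AP: "A \<subseteq> D3_arcs E inc" "\<Union>P = E" "\<forall>C\<in>P. \<forall>D\<in>P. C \<noteq> D \<longrightarrow> C \<inter> D = {}"
      "A \<subseteq> (\<Union>C\<in>P. C \<times> C)" "\<forall>C\<in>P. card C \<ge> 2 \<and> arborescence C (A \<inter> (C \<times> C))"
    using assms(2) unfolding has_spanning_arborescence_forest_def by blast
  have AE: "A \<subseteq> E \<times> E" using AP(1) by (auto simp: D3_arcs_def)
  define root where "root C = (SOME r. r \<in> C \<and> (\<forall>x\<in>C. (x, r) \<in> (A \<inter> (C \<times> C))\<^sup>*))" for C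
  have rootp: "root C \<in> C \<and> (\<forall>x\<in>C. (x, root C) \<in> (A \<inter> (C \<times> C))\<^sup>*)" if "C \<in> P" for C
  proof -
    have "arborescence C (A \<inter> (C \<times> C))" using AP(5) that by blast
    then have "\<exists>r. r \<in> C \<and> (\<forall>x\<in>C. (x, r) \<in> (A \<inter> (C \<times> C))\<^sup>*)"
      by (rule arb_root)
    then show ?thesis unfolding root_def by (rule someI_ex)
  qed
  have sameblk: "C = D" if "C \<in> P" "D \<in> P" "x \<in> C" "x \<in> D" for C D x
    using AP(3) that by blast
  define R where "R = root ` P"
  define d where "d x = (LEAST n. \<exists>r\<in>R. (x, r) \<in> A ^^ n)" for x
  have dex: "\<exists>r\<in>R. (x, r) \<in> A ^^ d x" if xE: "x \<in> E" for x
  proof -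
    obtain C where C: "C \<in> P" "x \<in> C" using xE AP(2) by blast
    have "(x, root C) \<in> (A \<inter> (C \<times> C))\<^sup>*" using rootp[OF C(1)] C(2) by blast
    then have "(x, root C) \<in> A\<^sup>*" using rtrancl_mono[of "A \<inter> (C \<times> C)" A] by blast
    then obtain n where "(x, root C) \<in> A ^^ n" using rtrancl_power by blast
    moreover have "root C \<in> R" using C(1) R_def by blast
    ultimately have "\<exists>n. \<exists>r\<in>R. (x, r) \<in> A ^^ n" by blast
    then show ?thesis unfolding d_def by (rule LeastI_ex)
  qed
  have parex: "\<exists>z. (x, z) \<in> A \<and> d z < d x" if xq: "x \<in> E" "x \<notin> R" for x
  proof -
    obtain r where r: "r \<in> R" "(x, r) \<in> A ^^ d x" using dex[OF xq(1)] by blast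
    have "d x \<noteq> 0"
    proof
      assume "d x = 0"
      then have "x = r" using r(2) by simp
      then show False using r(1) xq(2) by simp
    qed
    then obtain m where m: "d x = Suc m" by (cases "d x") auto
    then obtain z where z: "(x, z) \<in> A" "(z, r) \<in> A ^^ m" using r(2) relpow_Suc_D2[of x r m A] by auto
    have "d z \<le> m" unfolding d_def by (rule Least_le) (use z(2) r(1) in blast)
    then show ?thesis using z(1) m by auto
  qed
  define par where "par x = (SOME z. (x, z) \<in> A \<and> d z < d x)" for x
  have parp: "(x, par x) \<in> A \<and> d (par x) < d x" if "x \<in> E" "x \<notin> R" for x
    unfolding par_def by (rule someI_ex[OF parex[OF that]])
  have F2: "\<forall>x\<in>E. x \<notin> R \<longrightarrow> par x \<in> E \<and> d (par x) < d x \<and> (x, par x) \<in> D3_arcs E inc"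
    using parp AE AP(1) by blast
  have F3: "\<forall>x\<in>E\<inter>R. \<exists>y\<in>E-R. par y = x"
  proof
    fix x assume x: "x \<in> E \<inter> R"
    then obtain C where C: "C \<in> P" "x = root C" unfolding R_def by blast
    have xC: "x \<in> C" using rootp[OF C(1)] C(2) by blast
    have CE: "C \<subseteq> E" using AP(2) C(1) by blast
    have finC: "finite C" using CE hyp(1) finite_subset by blast
    have RC: "r \<in> C \<Longrightarrow> r \<in> R \<Longrightarrow> r = x" for r
    proof -
      assume r: "r \<in> C" "r \<in> R"
      then obtain D where D: "D \<in> P" "r = root D" unfolding R_def by blast
      have "r \<in> D" using rootp[OF D(1)] D(2) by blast
      then have "D = C" using sameblk[OF D(1) C(1)] r(1) by blast
      then show "r = x" using C D by simp
    qed
    have "card C \<ge> 2" using AP(5) C(1) by blast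
    have "C - {x} \<noteq> {}"
    proof
      assume "C - {x} = {}"
      then have "C \<subseteq> {x}" by blast
      then have "card C \<le> card {x}" by (rule card_mono[rotated]) simp
      then show False using \<open>card C \<ge> 2\<close> by simp
    qed
    moreover have "finite (C - {x})" using finC by simp
    ultimately have "Min (d ` (C - {x})) \<in> d ` (C - {x})" by simp
    then obtain y where y: "y \<in> C - {x}" "d y = Min (d ` (C - {x}))" by (metis imageE)
    have ymin: "\<forall>z\<in>C-{x}. d y \<le> d z" using y(2) finC by simp
    have yE: "y \<in> E" using y(1) CE by blast
    have yR: "y \<notin> R" using RC y(1) by blast
    have py: "(y, par y) \<in> A" "d (par y) < d y" using parp[OF yE yR] by blast+
    obtain D where D: "D \<in> P" "y \<in> D" "par y \<in> D" using AP(4) py(1) by blast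
    have "D = C" using sameblk[OF D(1) C(1) D(2)] y(1) by blast
    then have pyC: "par y \<in> C" using D(3) by blast
    have "par y = x"
    proof (rule ccontr)
      assume "par y \<noteq> x"
      then have "d y \<le> d (par y)" using ymin pyC by blast
      then show False using py(2) by simp
    qed
    then show "\<exists>y\<in>E-R. par y = x" using yE yR by blast
  qed
  obtain p where p: "\<forall>e\<in>E. p e \<subseteq> inc e \<and> card (p e) = 2" "\<forall>v. even (card {e\<in>E. v \<in> p e})"
    using pairs_forest[OF hyp(1) F2 F3] by blast
  have "\<forall>e\<in>E. \<exists>ab. p e = {fst ab, snd ab} \<and> fst ab \<noteq> snd ab"
  proof
    fix e assume "e \<in> E"
    then have "card (p e) = 2" using p(1) by blast
    then obtain a b where "p e = {a, b}" "a \<noteq> b" by (auto simp: card_2_iff)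
    then show "\<exists>ab. p e = {fst ab, snd ab} \<and> fst ab \<noteq> snd ab" by (intro exI[of _ "(a,b)"]) simp
  qed
  then obtain g where g: "\<forall>e\<in>E. p e = {fst (g e), snd (g e)} \<and> fst (g e) \<noteq> snd (g e)"
    by (metis bchoice)
  define sg where "sg e = [(fst (g e), e, snd (g e))]" for e
  let ?S = "sg ` E"
  have segS: "\<forall>s\<in>?S. seg V E inc s"
  proof
    fix s assume "s \<in> ?S"
    then obtain e where e: "e \<in> E" "s = sg e" by blast
    have "p e \<subseteq> inc e" "inc e \<subseteq> V" using p(1) hyp(2) e(1) by blast+
    then have "vstep V E inc (fst (g e), e, snd (g e))" using g e(1) by (auto simp: vstep_def)
    then show "seg V E inc s" using g e by (simp add: seg_def trl_def sg_def src_def trg_def)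
  qed
  have edsg: "edges (sg e) = {e}" for e by (simp add: sg_def edges_def)
  have injsg: "inj_on sg E" by (rule inj_onI) (simp add: sg_def)
  have disS: "\<forall>s\<in>?S. \<forall>t\<in>?S. s \<noteq> t \<longrightarrow> edges s \<inter> edges t = {}"
    using edsg by auto
  have evS: "\<forall>v. even (card {s\<in>?S. v = src s \<or> v = trg s})"
  proof
    fix v
    have "{s\<in>?S. v = src s \<or> v = trg s} = sg ` {e\<in>E. v \<in> p e}"
      using g by (auto simp: sg_def src_def trg_def)
    moreover have "card (sg ` {e\<in>E. v \<in> p e}) = card {e\<in>E. v \<in> p e}"
      by (rule card_image) (rule inj_on_subset[OF injsg], blast)
    ultimately show "even (card {s\<in>?S. v = src s \<or> v = trg s})" using p(2) by simp
  qed
  have US: "(\<Union>s\<in>?S. edges s) = E" using edsg by auto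
  obtain F where "finite F" "EF V E inc (\<Union>s\<in>?S. edges s) F"
    using seg_EF[OF _ segS disS evS] hyp(1) by blast
  then have "euler_family V E inc (cv ` F)" using EF_euler US by metis
  then show ?thesis unfolding quasi_eulerian_def by blast
qed

end
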